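(* Let $(M,g)$ be a space-time of dimension $n>3$ with smooth, non-collinear vector fields $u,w$ satisfying $u^ku_k=w^kw_k=-1$, $\nabla_iu_j=\varphi(u_iu_j+g_{ij})$ and $\nabla_iw_j=\lambda(w_iw_j+g_{ij})$ for scalar fields $\varphi,\lambda$. Suppose $\nabla_k\varphi=-u_k\,u^m\nabla_m\varphi+v\,b_k$ with $v\neq0$, $b^kb_k=1$, $u^kb_k=0$, and $w_i=u_i\cosh\alpha+b_i\sinh\alpha$ with $\alpha\neq0$. Then the Weyl tensor satisfies $$(u^ru^s+b^rb^s)\,C_{rijs}=(u_iu_j+b_ib_j)\,(b^kb^lE_{kl}),$$ where $E_{ij}=u^ru^sC_{rijs}$.
   Context: A space-time is a Lorentzian manifold with metric of signature $(-,+,\dots,+)$; $\nabla$ is its Levi-Civita connection. The Riemann tensor is defined by $[\nabla_i,\nabla_j]X_k=R_{ijkm}X^m$, and $C_{ijkl}$ is the corresponding Weyl (conformal curvature) tensor. $E_{ij}=u^ru^sC_{rijs}$ is the electric component of the Weyl tensor with respect to $u$; it satisfies $E_{ij}u^i=0$ and $E^i{}_i=0$. *)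

theory Defs
  imports "HOL-Analysis.Analysis"
begin

text \<open>Local-coordinate rendering of (pseudo-)Riemannian geometry on an open
set U of R^n (coordinates indexed by the finite type 'n).  Tensor fields are
given by their coordinate components; all indices are lowered unless raised
explicitly with the inverse metric.\<close>

definition pd :: "'n::finite \<Rightarrow> (real^'n \<Rightarrow> real) \<Rightarrow> real^'n \<Rightarrow> real" where
  "pd i f x = frechet_derivative f (at x) (axis i 1)"

fun pds :: "'n::finite list \<Rightarrow> (real^'n \<Rightarrow> real) \<Rightarrow> real^'n \<Rightarrow> real" where
  "pds [] f = f"
| "pds (k # ks) f = pd k (pds ks f)"

definition smooth_on_set :: "(real^'n::finite) set \<Rightarrow> (real^'n \<Rightarrow> real) \<Rightarrow> bool" where
  "smooth_on_set U f \<longleftrightarrow> (\<forall>ks. \<forall>x\<in>U. pds ks f differentiable (at x))"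

definition lorentzian_form :: "('n::finite \<Rightarrow> 'n \<Rightarrow> real) \<Rightarrow> bool" where
  "lorentzian_form G \<longleftrightarrow> (\<forall>i j. G i j = G j i) \<and>
     (\<exists>P::real^'n^'n. invertible P \<and> (\<exists>i0. \<forall>a b.
        (\<Sum>i\<in>UNIV. \<Sum>j\<in>UNIV. P$i$a * G i j * P$j$b) =
        (if a = b then (if a = i0 then -1 else 1) else 0)))"

type_synonym 'n metric = "real^'n \<Rightarrow> 'n \<Rightarrow> 'n \<Rightarrow> real"
type_synonym 'n covf = "real^'n \<Rightarrow> 'n \<Rightarrow> real"

definition ginv :: "'n::finite metric \<Rightarrow> real^'n \<Rightarrow> 'n \<Rightarrow> 'n \<Rightarrow> real" where
  "ginv g x k l = matrix_inv (\<chi> i j. g x i j) $ k $ l"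

definition up :: "'n::finite metric \<Rightarrow> 'n covf \<Rightarrow> real^'n \<Rightarrow> 'n \<Rightarrow> real" where
  "up g X x k = (\<Sum>l\<in>UNIV. ginv g x k l * X x l)"

definition christoffel :: "'n::finite metric \<Rightarrow> real^'n \<Rightarrow> 'n \<Rightarrow> 'n \<Rightarrow> 'n \<Rightarrow> real" where
  "christoffel g x k i j = (1/2) * (\<Sum>l\<in>UNIV. ginv g x k l *
     (pd i (\<lambda>y. g y j l) x + pd j (\<lambda>y. g y i l) x - pd l (\<lambda>y. g y i j) x))"

definition cov :: "'n::finite metric \<Rightarrow> 'n covf \<Rightarrow> real^'n \<Rightarrow> 'n \<Rightarrow> 'n \<Rightarrow> real" where
  "cov g X x i j = pd i (\<lambda>y. X y j) x - (\<Sum>k\<in>UNIV. christoffel g x k i j * X x k)"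

text \<open>Coefficients K^a_{ijk} with [nabla_i, nabla_j] X_k = K^a_{ijk} X_a.\<close>
definition Kcurv :: "'n::finite metric \<Rightarrow> real^'n \<Rightarrow> 'n \<Rightarrow> 'n \<Rightarrow> 'n \<Rightarrow> 'n \<Rightarrow> real" where
  "Kcurv g x a i j k =
     - pd i (\<lambda>y. christoffel g y a j k) x + pd j (\<lambda>y. christoffel g y a i k) x
     + (\<Sum>b\<in>UNIV. christoffel g x b i k * christoffel g x a j b
                  - christoffel g x b j k * christoffel g x a i b)"

text \<open>Riemann tensor with the convention [nabla_i, nabla_j] X_k = R_{ijkm} X^m,
i.e. R_{ijkm} = K^a_{ijk} g_{am}.\<close>
definition Riem :: "'n::finite metric \<Rightarrow> real^'n \<Rightarrow> 'n \<Rightarrow> 'n \<Rightarrow> 'n \<Rightarrow> 'n \<Rightarrow> real" where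
  "Riem g x i j k m = (\<Sum>a\<in>UNIV. Kcurv g x a i j k * g x a m)"

definition Ric :: "'n::finite metric \<Rightarrow> real^'n \<Rightarrow> 'n \<Rightarrow> 'n \<Rightarrow> real" where
  "Ric g x j l = (\<Sum>i\<in>UNIV. \<Sum>k\<in>UNIV. ginv g x i k * Riem g x i j k l)"

definition Scal :: "'n::finite metric \<Rightarrow> real^'n \<Rightarrow> real" where
  "Scal g x = (\<Sum>j\<in>UNIV. \<Sum>l\<in>UNIV. ginv g x j l * Ric g x j l)"

definition Weyl :: "'n::finite metric \<Rightarrow> real^'n \<Rightarrow> 'n \<Rightarrow> 'n \<Rightarrow> 'n \<Rightarrow> 'n \<Rightarrow> real" where
  "Weyl g x i j k l =
     Riem g x i j k l
     - (g x i k * Ric g x j l - g x i l * Ric g x j k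
        - g x j k * Ric g x i l + g x j l * Ric g x i k) / (real CARD('n) - 2)
     + Scal g x * (g x i k * g x j l - g x i l * g x j k)
        / ((real CARD('n) - 1) * (real CARD('n) - 2))"

definition Eweyl :: "'n::finite metric \<Rightarrow> 'n covf \<Rightarrow> real^'n \<Rightarrow> 'n \<Rightarrow> 'n \<Rightarrow> real" where
  "Eweyl g u x i j = (\<Sum>r\<in>UNIV. \<Sum>s\<in>UNIV. up g u x r * up g u x s * Weyl g x r i j s)"

end

theory Submission
  imports Defs
begin

lemma frechet_local:
  assumes "open U" "x \<in> U" "\<And>y. y \<in> U \<Longrightarrow> f y = h y"
  shows "frechet_derivative f (at x) = frechet_derivative h (at x)"
proof -
  have "\<And>f'. (f has_derivative f') (at x) = (h has_derivative f') (at x)"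
    using assms by (metis has_derivative_transform_within_open)
  then show ?thesis unfolding frechet_derivative_def by simp
qed

lemma pd_local:
  assumes "open U" "x \<in> U" "\<And>y. y \<in> U \<Longrightarrow> f y = h y"
  shows "pd i f x = pd i h x"
  unfolding pd_def using frechet_local[OF assms] by simp

lemma diff_local:
  assumes "open U" "x \<in> U" "\<And>y. y \<in> U \<Longrightarrow> f y = h y" "f differentiable (at x)"
  shows "h differentiable (at x)"
  using assms unfolding differentiable_def by (metis has_derivative_transform_within_open)

lemma pd_has: "(f has_derivative f') (at x) \<Longrightarrow> pd i f x = f' (axis i 1)"
  unfolding pd_def by (metis frechet_derivative_at)

lemma has_pd: "f differentiable (at x) \<Longrightarrow> (f has_derivative frechet_derivative f (at x)) (at x)"
  by (simp add: frechet_derivative_works)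

lemma pd_add: "f differentiable (at x) \<Longrightarrow> h differentiable (at x) \<Longrightarrow>
   pd i (\<lambda>y. f y + h y) x = pd i f x + pd i h x"
  by (rule trans[OF pd_has[OF has_derivative_add[OF has_pd has_pd]]]) (auto simp: pd_def)

lemma pd_diff: "f differentiable (at x) \<Longrightarrow> h differentiable (at x) \<Longrightarrow>
   pd i (\<lambda>y. f y - h y) x = pd i f x - pd i h x"
  by (rule trans[OF pd_has[OF has_derivative_diff[OF has_pd has_pd]]]) (auto simp: pd_def)

lemma pd_mult: "f differentiable (at x) \<Longrightarrow> h differentiable (at x) \<Longrightarrow>
   pd i (\<lambda>y. f y * h y) x = pd i f x * h x + f x * pd i h x"
  by (rule trans[OF pd_has[OF has_derivative_mult[OF has_pd has_pd]]]) (auto simp: pd_def)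

lemma pd_const: "pd i (\<lambda>y. c) x = 0"
  by (simp add: pd_def)

lemma pd_cmult: "f differentiable (at x) \<Longrightarrow> pd i (\<lambda>y. c * f y) x = c * pd i f x"
  using pd_mult[of "\<lambda>y. c" x f i] by (simp add: pd_const)

lemma pd_sum: "finite A \<Longrightarrow> (\<And>a. a \<in> A \<Longrightarrow> f a differentiable (at x)) \<Longrightarrow>
   pd i (\<lambda>y. \<Sum>a\<in>A. f a y) x = (\<Sum>a\<in>A. pd i (f a) x)"
  by (rule trans[OF pd_has[OF has_derivative_sum[OF has_pd]]]) (auto simp: pd_def)

lemma line_deriv:
  fixes F :: "real^'n::finite \<Rightarrow> real"
  assumes "F differentiable (at (y + t *\<^sub>R axis k 1))"
  shows "((\<lambda>t. F (y + t *\<^sub>R axis k 1)) has_real_derivative pd k F (y + t *\<^sub>R axis k 1)) (at t)"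
proof -
  have l: "((\<lambda>t. y + t *\<^sub>R axis k (1::real)) has_derivative (\<lambda>s. s *\<^sub>R axis k 1)) (at t)"
    by (auto intro!: derivative_eq_intros)
  have "((\<lambda>t. F (y + t *\<^sub>R axis k 1)) has_derivative
      (\<lambda>s. frechet_derivative F (at (y + t *\<^sub>R axis k 1)) (s *\<^sub>R axis k 1))) (at t)"
    using has_derivative_compose[OF l has_pd[OF assms]] by (simp add: o_def)
  moreover have "linear (frechet_derivative F (at (y + t *\<^sub>R axis k 1)))"
    using assms linear_frechet_derivative by blast
  ultimately show ?thesis
    unfolding has_field_derivative_def pd_def
    by (simp add: linear.scaleR mult.commute[of _ "frechet_derivative F (at (y + t *\<^sub>R axis k 1)) (axis k 1)"])
qed

lemma near_pts:
  fixes x :: "real^'n::finite"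
  assumes "ball x d \<subseteq> U" "0 \<le> s" "s \<le> h" "0 \<le> t" "t \<le> h" "2*h < d"
  shows "(x + t *\<^sub>R axis j 1) + s *\<^sub>R axis i 1 \<in> U"
    and "dist ((x + t *\<^sub>R axis j 1) + s *\<^sub>R axis i 1) x \<le> 2*h"
proof -
  have "dist ((x + t *\<^sub>R axis j 1) + s *\<^sub>R axis i 1) x = norm (t *\<^sub>R axis j (1::real) + s *\<^sub>R axis i 1)"
    by (simp add: dist_norm algebra_simps)
  also have "\<dots> \<le> norm (t *\<^sub>R axis j (1::real)) + norm (s *\<^sub>R axis i (1::real))"
    by (rule norm_triangle_ineq)
  also have "\<dots> = t + s" using assms by simp
  finally have d: "dist ((x + t *\<^sub>R axis j 1) + s *\<^sub>R axis i 1) x \<le> t + s" .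
  then show "dist ((x + t *\<^sub>R axis j 1) + s *\<^sub>R axis i 1) x \<le> 2*h" using assms by linarith
  show "(x + t *\<^sub>R axis j 1) + s *\<^sub>R axis i 1 \<in> U"
    using d assms by (intro subsetD[OF assms(1)]) (simp add: dist_commute)
qed

lemma mixed_step:
  fixes f :: "real^'n::finite \<Rightarrow> real"
  assumes B: "ball x d \<subseteq> U" and h: "0 < h" "2*h < d"
    and df: "\<And>y. y\<in>U \<Longrightarrow> f differentiable (at y)"
    and dfi: "\<And>y. y\<in>U \<Longrightarrow> pd i f differentiable (at y)"
  shows "\<exists>\<xi>. dist \<xi> x \<le> 2*h \<and>
     f ((x + h *\<^sub>R axis j 1) + h *\<^sub>R axis i 1) - f (x + h *\<^sub>R axis i 1) - f (x + h *\<^sub>R axis j 1) + f x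
     = h * (h * pd j (pd i f) \<xi>)"
proof -
  let ?ei = "axis i (1::real)" and ?ej = "axis j (1::real)"
  have P: "\<And>s t. 0 \<le> s \<Longrightarrow> s \<le> h \<Longrightarrow> 0 \<le> t \<Longrightarrow> t \<le> h \<Longrightarrow> (x + t *\<^sub>R ?ej) + s *\<^sub>R ?ei \<in> U"
    using near_pts(1)[OF B _ _ _ _ h(2)] by blast
  have P0: "\<And>s. 0 \<le> s \<Longrightarrow> s \<le> h \<Longrightarrow> x + s *\<^sub>R ?ei \<in> U"
    using P[of _ 0] h by simp
  have "\<exists>z. 0 < z \<and> z < h \<and>
      (f ((x + h *\<^sub>R ?ej) + h *\<^sub>R ?ei) - f (x + h *\<^sub>R ?ei)) - (f ((x + h *\<^sub>R ?ej) + 0 *\<^sub>R ?ei) - f (x + 0 *\<^sub>R ?ei))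
      = (h - 0) * (pd i f ((x + h *\<^sub>R ?ej) + z *\<^sub>R ?ei) - pd i f (x + z *\<^sub>R ?ei))"
    apply (rule MVT2[where f="\<lambda>s. f ((x + h *\<^sub>R ?ej) + s *\<^sub>R ?ei) - f (x + s *\<^sub>R ?ei)"])
    using h apply simp
    apply (rule DERIV_diff)
     apply (rule line_deriv, rule df, rule P, simp_all add: h(1)[THEN less_imp_le])
    apply (rule line_deriv, rule df, rule P0, simp_all)
    done
  then obtain \<sigma> where s: "0 < \<sigma>" "\<sigma> < h" and e1:
      "(f ((x + h *\<^sub>R ?ej) + h *\<^sub>R ?ei) - f (x + h *\<^sub>R ?ei)) - (f (x + h *\<^sub>R ?ej) - f x)
      = h * (pd i f ((x + h *\<^sub>R ?ej) + \<sigma> *\<^sub>R ?ei) - pd i f (x + \<sigma> *\<^sub>R ?ei))"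
    by auto
  have "\<exists>z. 0 < z \<and> z < h \<and>
      pd i f ((x + \<sigma> *\<^sub>R ?ei) + h *\<^sub>R ?ej) - pd i f ((x + \<sigma> *\<^sub>R ?ei) + 0 *\<^sub>R ?ej)
      = (h - 0) * pd j (pd i f) ((x + \<sigma> *\<^sub>R ?ei) + z *\<^sub>R ?ej)"
    apply (rule MVT2[where f="\<lambda>t. pd i f ((x + \<sigma> *\<^sub>R ?ei) + t *\<^sub>R ?ej)"])
    using h apply simp
    apply (rule line_deriv, rule dfi)
    using P[of \<sigma>] s apply (simp add: algebra_simps)
    done
  then obtain \<tau> where t: "0 < \<tau>" "\<tau> < h" and e2:
      "pd i f ((x + \<sigma> *\<^sub>R ?ei) + h *\<^sub>R ?ej) - pd i f (x + \<sigma> *\<^sub>R ?ei)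
      = h * pd j (pd i f) ((x + \<sigma> *\<^sub>R ?ei) + \<tau> *\<^sub>R ?ej)"
    by auto
  have eq: "(x + \<sigma> *\<^sub>R ?ei) + h *\<^sub>R ?ej = (x + h *\<^sub>R ?ej) + \<sigma> *\<^sub>R ?ei"
     "(x + \<sigma> *\<^sub>R ?ei) + \<tau> *\<^sub>R ?ej = (x + \<tau> *\<^sub>R ?ej) + \<sigma> *\<^sub>R ?ei"
    by (simp_all add: algebra_simps)
  show ?thesis
    apply (rule exI[of _ "(x + \<tau> *\<^sub>R ?ej) + \<sigma> *\<^sub>R ?ei"])
    apply (intro conjI)
     apply (rule near_pts(2)[OF B _ _ _ _ h(2)])
    using s t apply simp_all
    using e1 e2 eq by (simp add: algebra_simps)
qed

lemma schwarz:
  fixes f :: "real^'n::finite \<Rightarrow> real"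
  assumes U: "open U" "x \<in> U"
    and df: "\<And>y. y\<in>U \<Longrightarrow> f differentiable (at y)"
    and dfi: "\<And>y. y\<in>U \<Longrightarrow> pd i f differentiable (at y)"
    and dfj: "\<And>y. y\<in>U \<Longrightarrow> pd j f differentiable (at y)"
    and cij: "isCont (pd j (pd i f)) x" and cji: "isCont (pd i (pd j f)) x"
  shows "pd j (pd i f) x = pd i (pd j f) x"
proof (rule ccontr)
  assume ne: "pd j (pd i f) x \<noteq> pd i (pd j f) x"
  define e where "e = \<bar>pd j (pd i f) x - pd i (pd j f) x\<bar> / 3"
  have e: "e > 0" using ne by (simp add: e_def)
  obtain d where d: "d > 0" "ball x d \<subseteq> U" using U open_contains_ball by blast
  obtain d1 where d1: "d1 > 0" "\<And>y. dist y x < d1 \<Longrightarrow> dist (pd j (pd i f) y) (pd j (pd i f) x) < e"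
    using cij e unfolding continuous_at_eps_delta by blast
  obtain d2 where d2: "d2 > 0" "\<And>y. dist y x < d2 \<Longrightarrow> dist (pd i (pd j f) y) (pd i (pd j f) x) < e"
    using cji e unfolding continuous_at_eps_delta by blast
  define h where "h = Min {d, d1, d2} / 4"
  have h: "0 < h" "2*h < d" "2*h < d1" "2*h < d2" using d d1 d2 by (auto simp: h_def)
  obtain a where a: "dist a x \<le> 2*h" and ea:
    "f ((x + h *\<^sub>R axis j 1) + h *\<^sub>R axis i 1) - f (x + h *\<^sub>R axis i 1) - f (x + h *\<^sub>R axis j 1) + f x
     = h * (h * pd j (pd i f) a)"
    using mixed_step[OF d(2) h(1,2) df dfi] by blast
  obtain b where b: "dist b x \<le> 2*h" and eb:
    "f ((x + h *\<^sub>R axis i 1) + h *\<^sub>R axis j 1) - f (x + h *\<^sub>R axis j 1) - f (x + h *\<^sub>R axis i 1) + f x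
     = h * (h * pd i (pd j f) b)"
    using mixed_step[OF d(2) h(1,2) df dfj] by blast
  have "(x + h *\<^sub>R axis i 1) + h *\<^sub>R axis j 1 = (x + h *\<^sub>R axis j 1) + h *\<^sub>R axis i (1::real)"
    by (simp add: algebra_simps)
  then have "h * (h * pd j (pd i f) a) = h * (h * pd i (pd j f) b)" using ea eb by (simp only:)
  then have ab: "pd j (pd i f) a = pd i (pd j f) b" using h(1) by simp
  have "dist (pd j (pd i f) a) (pd j (pd i f) x) < e" using d1(2) a h by simp
  moreover have "dist (pd i (pd j f) b) (pd i (pd j f) x) < e" using d2(2) b h by simp
  ultimately show False using ab e_def e unfolding dist_real_def by argo
qed

lemma lor_sym: "lorentzian_form G \<Longrightarrow> G i j = G j i"
  unfolding lorentzian_form_def by blast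

lemma lor_det:
  fixes G :: "'n::finite \<Rightarrow> 'n \<Rightarrow> real"
  assumes "lorentzian_form G"
  shows "det (\<chi> i j. G i j) \<noteq> 0"
proof -
  obtain P :: "real^'n^'n" and i0 where P: "invertible P" and
    D: "\<And>a b. (\<Sum>i\<in>UNIV. \<Sum>j\<in>UNIV. P$i$a * G i j * P$j$b) = (if a = b then (if a = i0 then -1 else 1) else 0)"
    using assms unfolding lorentzian_form_def by blast
  let ?A = "(\<chi> i j. G i j) :: real^'n^'n"
  let ?D = "(\<chi> a b. if a = b then (if a = i0 then -1 else 1) else 0) :: real^'n^'n"
  have "transpose P ** ?A ** P = ?D"
  proof -
    have "\<And>a b. (transpose P ** ?A ** P)$a$b = (\<Sum>i\<in>UNIV. \<Sum>j\<in>UNIV. P$i$a * G i j * P$j$b)"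
      apply (simp add: matrix_matrix_mult_def transpose_def sum_distrib_right)
      apply (subst sum.swap) apply (simp add: mult.commute mult.left_commute)
      done
    then show ?thesis using D by (simp add: vec_eq_iff)
  qed
  then have "det (transpose P) * det ?A * det P = det ?D" by (metis det_mul)
  moreover have "det ?D = (\<Prod>i\<in>UNIV. if i = i0 then -1 else 1)"
    by (subst det_diagonal) auto
  moreover have "(\<Prod>i\<in>UNIV. (if i = i0 then -1 else 1::real)) \<noteq> 0"
    by (simp add: prod_zero_iff)
  ultimately show ?thesis by auto
qed

lemma differentiable_prod_at:
  fixes f :: "'i \<Rightarrow> 'a::real_normed_vector \<Rightarrow> real"
  shows "finite A \<Longrightarrow> (\<And>a. a \<in> A \<Longrightarrow> f a differentiable (at x)) \<Longrightarrow>
    (\<lambda>y. \<Prod>a\<in>A. f a y) differentiable (at x)"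
proof (induction A rule: finite_induct)
  case empty then show ?case by simp
next
  case (insert a A)
  then show ?case by (simp add: differentiable_mult)
qed

lemma det_differentiable:
  fixes h :: "'n::finite \<Rightarrow> 'n \<Rightarrow> 'a::real_normed_vector \<Rightarrow> real"
  assumes "\<And>i j. h i j differentiable (at x)"
  shows "(\<lambda>y. det ((\<chi> i j. h i j y) :: real^'n^'n)) differentiable (at x)"
  unfolding det_def
  by (intro differentiable_sum ballI differentiable_mult differentiable_const
      differentiable_prod_at) (auto intro: assms)

lemma matrix_inv_cramer:
  fixes A :: "real^'n::finite^'n"
  assumes "det A \<noteq> 0"
  shows "matrix_inv A $ k $ l = det ((\<chi> i j. if j = k then (if i = l then 1 else 0) else A$i$j) :: real^'n^'n) / det A"
proof -
  have inv: "invertible A" using assms invertible_det_nz by blast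
  then have AM: "A ** matrix_inv A = mat 1"
    unfolding matrix_inv_def invertible_def by (metis (mono_tags, lifting) someI_ex)
  define xv where "xv = matrix_inv A *v axis l 1"
  have "A *v xv = axis l 1" unfolding xv_def by (simp add: matrix_vector_mul_assoc AM)
  then have c: "det ((\<chi> i j. if j = k then (axis l 1)$i else A$i$j) :: real^'n^'n) = xv$k * det A"
    using cramer_lemma[where A=A and x=xv and k=k] by (simp only:)
  have "xv $ k = matrix_inv A $ k $ l"
    unfolding xv_def matrix_vector_mult_def axis_def
    by (simp add: if_distrib cong: if_cong)
  moreover have "(\<chi> i j. if j = k then (axis l (1::real))$i else A$i$j) =
     (\<chi> i j. if j = k then (if i = l then 1 else 0) else A$i$j)"
    by (simp add: axis_def vec_eq_iff)
  ultimately show ?thesis using c assms by (simp add: field_simps)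
qed

lemma matrix_inv_props:
  fixes A :: "real^'n::finite^'n"
  assumes "det A \<noteq> 0"
  shows "A ** matrix_inv A = mat 1" "matrix_inv A ** A = mat 1"
proof -
  have inv: "invertible A" using assms invertible_det_nz by blast
  then show "A ** matrix_inv A = mat 1" "matrix_inv A ** A = mat 1"
    unfolding matrix_inv_def invertible_def by (metis (mono_tags, lifting) someI_ex)+
qed

lemma smooth_d0: "smooth_on_set U f \<Longrightarrow> x \<in> U \<Longrightarrow> f differentiable (at x)"
  unfolding smooth_on_set_def using pds.simps(1) by metis

lemma smooth_d1: "smooth_on_set U f \<Longrightarrow> x \<in> U \<Longrightarrow> pd k f differentiable (at x)"
  unfolding smooth_on_set_def by (metis pds.simps)

lemma smooth_d2: "smooth_on_set U f \<Longrightarrow> x \<in> U \<Longrightarrow> pd k (pd l f) differentiable (at x)"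
  unfolding smooth_on_set_def by (metis pds.simps)

lemma smooth_schwarz:
  assumes "open U" "smooth_on_set U f" "x \<in> U"
  shows "pd i (pd j f) x = pd j (pd i f) x"
proof -
  have c: "\<And>k l. isCont (pd k (pd l f)) x"
    using smooth_d2[OF assms(2,3)] differentiable_imp_continuous_within by blast
  show ?thesis
    by (rule schwarz[OF assms(1,3)], auto intro: smooth_d0 smooth_d1 assms c)
qed

locale ST =
  fixes U :: "(real^'n::finite) set" and g :: "'n metric"
  assumes U_open: "open U"
    and g_smooth: "\<And>i j. smooth_on_set U (\<lambda>x. g x i j)"
    and g_lor: "\<And>x. x \<in> U \<Longrightarrow> lorentzian_form (g x)"
begin

lemma gsym: "x \<in> U \<Longrightarrow> g x i j = g x j i"
  using g_lor lor_sym by blast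

lemma gdet: "x \<in> U \<Longrightarrow> det ((\<chi> i j. g x i j) :: real^'n^'n) \<noteq> 0"
  using g_lor lor_det by blast

lemma ginv_left: "x \<in> U \<Longrightarrow> (\<Sum>m\<in>UNIV. ginv g x k m * g x m l) = (if k = l then 1 else 0)"
proof -
  assume x: "x \<in> U"
  have "(matrix_inv (\<chi> i j. g x i j) ** (\<chi> i j. g x i j)) $ k $ l = (mat 1 :: real^'n^'n) $ k $ l"
    using matrix_inv_props(2)[OF gdet[OF x]] by simp
  then show ?thesis by (simp add: matrix_matrix_mult_def mat_def ginv_def)
qed

lemma ginv_right: "x \<in> U \<Longrightarrow> (\<Sum>m\<in>UNIV. g x k m * ginv g x m l) = (if k = l then 1 else 0)"
proof -
  assume x: "x \<in> U"
  have "((\<chi> i j. g x i j) ** matrix_inv (\<chi> i j. g x i j)) $ k $ l = (mat 1 :: real^'n^'n) $ k $ l"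
    using matrix_inv_props(1)[OF gdet[OF x]] by simp
  then show ?thesis by (simp add: matrix_matrix_mult_def mat_def ginv_def)
qed

lemma ginv_sym: "x \<in> U \<Longrightarrow> ginv g x k l = ginv g x l k"
proof -
  assume x: "x \<in> U"
  let ?A = "(\<chi> i j. g x i j) :: real^'n^'n"
  let ?M = "matrix_inv ?A"
  have tA: "transpose ?A = ?A" using gsym[OF x] by (simp add: transpose_def vec_eq_iff)
  have "transpose ?M ** ?A = mat 1"
    by (metis matrix_inv_props(1)[OF gdet[OF x]] matrix_transpose_mul tA transpose_mat)
  then have "transpose ?M = ?M"
    by (metis matrix_inv_props(1)[OF gdet[OF x]] matrix_mul_assoc matrix_mul_lid matrix_mul_rid)
  then have "transpose ?M $ l $ k = ?M $ l $ k" by simp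
  then show ?thesis by (simp add: ginv_def transpose_def)
qed

lemma g_d0: "x \<in> U \<Longrightarrow> (\<lambda>y. g y i j) differentiable (at x)"
  using smooth_d0[OF g_smooth] by blast

lemma g_d1: "x \<in> U \<Longrightarrow> pd k (\<lambda>y. g y i j) differentiable (at x)"
  using smooth_d1[OF g_smooth] by blast

lemma ginv_d: "x \<in> U \<Longrightarrow> (\<lambda>y. ginv g y k l) differentiable (at x)"
proof -
  assume x: "x \<in> U"
  let ?N = "\<lambda>y. det ((\<chi> i j. if j = k then (if i = l then 1 else 0) else g y i j) :: real^'n^'n)"
  let ?D = "\<lambda>y. det ((\<chi> i j. g y i j) :: real^'n^'n)"
  have eq: "\<And>y. y \<in> U \<Longrightarrow> ?N y / ?D y = ginv g y k l"
  proof -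
    fix y assume y: "y \<in> U"
    have m: "((\<chi> i j. if j = k then (if i = l then 1 else 0) else ((\<chi> i j. g y i j)::real^'n^'n)$i$j) :: real^'n^'n)
       = (\<chi> i j. if j = k then (if i = l then 1 else 0) else g y i j)"
      by (simp add: vec_eq_iff)
    show "?N y / ?D y = ginv g y k l"
      unfolding ginv_def matrix_inv_cramer[OF gdet[OF y], of k l] m ..
  qed
  have "?N differentiable (at x)"
    apply (rule det_differentiable)
    subgoal for i j by (cases "j = k"; cases "i = l") (simp_all add: g_d0[OF x])
    done
  moreover have "?D differentiable (at x)"
    by (rule det_differentiable) (auto intro: g_d0[OF x])
  ultimately have "(\<lambda>y. ?N y / ?D y) differentiable (at x)"
    using gdet[OF x] by (intro differentiable_divide) auto
  then show ?thesis using diff_local[OF U_open x, where f="\<lambda>y. ?N y / ?D y" and h="\<lambda>y. ginv g y k l"] eq by blast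
qed

lemma pd_gsym: "y \<in> U \<Longrightarrow> pd k (\<lambda>y. g y i j) y = pd k (\<lambda>y. g y j i) y"
  by (rule pd_local[OF U_open]) (auto intro: gsym)

lemma chr_d: "x \<in> U \<Longrightarrow> (\<lambda>y. christoffel g y a i j) differentiable (at x)"
  unfolding christoffel_def
  by (intro differentiable_mult differentiable_const differentiable_sum ballI finite
     differentiable_add differentiable_diff ginv_d g_d1) auto

lemma chr_sym: "y \<in> U \<Longrightarrow> christoffel g y a i j = christoffel g y a j i"
  unfolding christoffel_def using pd_gsym by (simp add: ac_simps)

lemma chr_low: "y \<in> U \<Longrightarrow> (\<Sum>a\<in>UNIV. christoffel g y a j k * g y a m) =
   (1/2) * (pd j (\<lambda>y. g y k m) y + pd k (\<lambda>y. g y j m) y - pd m (\<lambda>y. g y j k) y)"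
proof -
  assume y: "y \<in> U"
  have "(\<Sum>a\<in>UNIV. christoffel g y a j k * g y a m) =
     (1/2) * (\<Sum>l\<in>UNIV. (\<Sum>a\<in>UNIV. ginv g y l a * g y a m) *
       (pd j (\<lambda>y. g y k l) y + pd k (\<lambda>y. g y j l) y - pd l (\<lambda>y. g y j k) y))"
    unfolding christoffel_def sum_distrib_left sum_distrib_right
    apply (subst sum.swap)
    apply (intro sum.cong refl)
    using ginv_sym[OF y] by (simp add: mult_ac)
  also have "\<dots> = (1/2) * (\<Sum>l\<in>UNIV. if l = m then 
       (pd j (\<lambda>y. g y k l) y + pd k (\<lambda>y. g y j l) y - pd l (\<lambda>y. g y j k) y) else 0)"
    by (intro arg_cong[where f="\<lambda>t. (1/2)*t"] sum.cong) (simp_all add: ginv_left[OF y])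
  also have "\<dots> = (1/2) * (pd j (\<lambda>y. g y k m) y + pd k (\<lambda>y. g y j m) y - pd m (\<lambda>y. g y j k) y)"
    by simp
  finally show ?thesis .
qed

lemma compat: "y \<in> U \<Longrightarrow> pd j (\<lambda>y. g y k m) y =
   (\<Sum>a\<in>UNIV. christoffel g y a j k * g y a m) + (\<Sum>a\<in>UNIV. christoffel g y a j m * g y a k)"
  using chr_low[of y j k m] chr_low[of y j m k] pd_gsym[of y j m k] by simp

end

context ST
begin

lemma pd_cov:
  assumes x: "x \<in> U" and X: "\<And>k. smooth_on_set U (\<lambda>y. X y k)"
  shows "pd i (\<lambda>y. cov g X y j k) x = pd i (pd j (\<lambda>y. X y k)) x
     - (\<Sum>a\<in>UNIV. pd i (\<lambda>y. christoffel g y a j k) x * X x a + christoffel g x a j k * pd i (\<lambda>y. X y a) x)"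
proof -
  have dX: "\<And>a. (\<lambda>y. X y a) differentiable (at x)" using smooth_d0[OF X x] .
  have dp: "pd j (\<lambda>y. X y k) differentiable (at x)" using smooth_d1[OF X x] .
  have ds: "(\<lambda>y. \<Sum>a\<in>UNIV. christoffel g y a j k * X y a) differentiable (at x)"
    by (intro differentiable_sum ballI finite differentiable_mult chr_d[OF x] dX)
  have "pd i (\<lambda>y. cov g X y j k) x = pd i (\<lambda>y. pd j (\<lambda>y. X y k) y - (\<Sum>a\<in>UNIV. christoffel g y a j k * X y a)) x"
    unfolding cov_def ..
  also have "\<dots> = pd i (pd j (\<lambda>y. X y k)) x - pd i (\<lambda>y. \<Sum>a\<in>UNIV. christoffel g y a j k * X y a) x"
    using pd_diff[OF dp ds] by simp
  also have "pd i (\<lambda>y. \<Sum>a\<in>UNIV. christoffel g y a j k * X y a) x =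
     (\<Sum>a\<in>UNIV. pd i (\<lambda>y. christoffel g y a j k * X y a) x)"
    by (rule pd_sum) (auto intro: differentiable_mult chr_d[OF x] dX)
  also have "\<dots> = (\<Sum>a\<in>UNIV. pd i (\<lambda>y. christoffel g y a j k) x * X x a + christoffel g x a j k * pd i (\<lambda>y. X y a) x)"
    by (intro sum.cong refl pd_mult chr_d[OF x] dX)
  finally show ?thesis .
qed

lemma ricci_id:
  assumes x: "x \<in> U" and X: "\<And>k. smooth_on_set U (\<lambda>y. X y k)"
  shows "(\<Sum>a\<in>UNIV. Kcurv g x a i j k * X x a) =
    pd i (\<lambda>y. cov g X y j k) x - pd j (\<lambda>y. cov g X y i k) x
    + (\<Sum>a\<in>UNIV. christoffel g x a j k * cov g X x i a)
    - (\<Sum>a\<in>UNIV. christoffel g x a i k * cov g X x j a)"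
proof -
  define Ga where "Ga a p q = christoffel g x a p q" for a p q
  define dG where "dG l a p q = pd l (\<lambda>y. christoffel g y a p q) x" for l a p q
  define dX where "dX l a = pd l (\<lambda>y. X y a) x" for l a
  define Xa where "Xa a = X x a" for a
  have sw: "pd i (pd j (\<lambda>y. X y k)) x = pd j (pd i (\<lambda>y. X y k)) x"
    using smooth_schwarz[OF U_open X x] .
  have L: "(\<Sum>a\<in>UNIV. Kcurv g x a i j k * X x a) =
     (\<Sum>a\<in>UNIV. (dG j a i k - dG i a j k) * Xa a) +
     (\<Sum>a\<in>UNIV. \<Sum>b\<in>UNIV. (Ga b i k * Ga a j b - Ga b j k * Ga a i b) * Xa a)"
    unfolding Kcurv_def Ga_def dG_def Xa_def
    by (simp add: algebra_simps sum.distrib sum_distrib_right sum_distrib_left sum_subtractf)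
  have R1: "pd i (\<lambda>y. cov g X y j k) x - pd j (\<lambda>y. cov g X y i k) x =
     (\<Sum>a\<in>UNIV. (dG j a i k - dG i a j k) * Xa a) +
     (\<Sum>a\<in>UNIV. Ga a i k * dX j a - Ga a j k * dX i a)"
    unfolding pd_cov[OF x X] sw Ga_def dG_def Xa_def dX_def
    by (simp add: algebra_simps sum.distrib sum_subtractf)
  have cv: "\<And>p a. cov g X x p a = dX p a - (\<Sum>b\<in>UNIV. Ga b p a * Xa b)"
    unfolding cov_def dX_def Ga_def Xa_def ..
  have R2: "(\<Sum>a\<in>UNIV. christoffel g x a j k * cov g X x i a)
    - (\<Sum>a\<in>UNIV. christoffel g x a i k * cov g X x j a) =
     (\<Sum>a\<in>UNIV. Ga a j k * dX i a - Ga a i k * dX j a) +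
     (\<Sum>a\<in>UNIV. \<Sum>b\<in>UNIV. Ga a i k * Ga b j a * Xa b - Ga a j k * Ga b i a * Xa b)"
    unfolding cv Ga_def[symmetric]
    by (simp add: algebra_simps sum.distrib sum_subtractf sum_distrib_left)
  have S: "(\<Sum>a\<in>UNIV. \<Sum>b\<in>UNIV. (Ga b i k * Ga a j b - Ga b j k * Ga a i b) * Xa a) =
     (\<Sum>a\<in>UNIV. \<Sum>b\<in>UNIV. Ga a i k * Ga b j a * Xa b - Ga a j k * Ga b i a * Xa b)"
    by (subst sum.swap) (simp add: algebra_simps)
  have Z: "(\<Sum>a\<in>UNIV. Ga a i k * dX j a - Ga a j k * dX i a) + (\<Sum>a\<in>UNIV. Ga a j k * dX i a - Ga a i k * dX j a) = 0"
    by (simp add: sum.distrib[symmetric] algebra_simps)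
  show ?thesis using L R1 R2 S Z by linarith
qed

end

lemma antisym_sum:
  fixes F :: "'a \<Rightarrow> 'a \<Rightarrow> real"
  assumes "\<And>a b. F a b = - F b a"
  shows "(\<Sum>a\<in>A. \<Sum>b\<in>A. F a b) = 0"
proof -
  have "(\<Sum>a\<in>A. \<Sum>b\<in>A. F a b) = (\<Sum>b\<in>A. \<Sum>a\<in>A. F a b)" by (rule sum.swap)
  also have "\<dots> = (\<Sum>b\<in>A. \<Sum>a\<in>A. - F b a)" by (intro sum.cong refl assms)
  also have "\<dots> = - (\<Sum>b\<in>A. \<Sum>a\<in>A. F b a)" by (simp add: sum_negf)
  finally show ?thesis by simp
qed

context ST
begin

lemma cov_g1: "y \<in> U \<Longrightarrow> cov g (\<lambda>y a. g y a m) y j k = (\<Sum>a\<in>UNIV. christoffel g y a j m * g y a k)"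
  unfolding cov_def using compat[of y j k m] by simp

lemma cov_g2: "y \<in> U \<Longrightarrow> cov g (\<lambda>y a. g y a m) y j k =
    (1/2) * (pd j (\<lambda>y. g y m k) y + pd m (\<lambda>y. g y j k) y - pd k (\<lambda>y. g y j m) y)"
  using cov_g1 chr_low by simp

lemma pd_cov_g: assumes x: "x \<in> U"
  shows "pd i (\<lambda>y. cov g (\<lambda>y a. g y a m) y j k) x =
    (1/2) * (pd i (pd j (\<lambda>y. g y m k)) x + pd i (pd m (\<lambda>y. g y j k)) x - pd i (pd k (\<lambda>y. g y j m)) x)"
proof -
  have "pd i (\<lambda>y. cov g (\<lambda>y a. g y a m) y j k) x =
     pd i (\<lambda>y. (1/2) * (pd j (\<lambda>y. g y m k) y + pd m (\<lambda>y. g y j k) y - pd k (\<lambda>y. g y j m) y)) x"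
    by (rule pd_local[OF U_open x]) (rule cov_g2)
  also have "\<dots> = (1/2) * (pd i (pd j (\<lambda>y. g y m k)) x + pd i (pd m (\<lambda>y. g y j k)) x - pd i (pd k (\<lambda>y. g y j m)) x)"
    apply (subst pd_cmult)
     apply (intro differentiable_add differentiable_diff g_d1[OF x])
    apply (subst pd_diff)
      apply (intro differentiable_add differentiable_diff g_d1[OF x])
     apply (intro differentiable_add differentiable_diff g_d1[OF x])
    apply (subst pd_add)
      apply (intro differentiable_add differentiable_diff g_d1[OF x])
     apply (intro differentiable_add differentiable_diff g_d1[OF x])
    apply simp
    done
  finally show ?thesis .
qed

lemma D2_swap: "x \<in> U \<Longrightarrow> pd p (pd q (\<lambda>y. g y r s)) x = pd q (pd p (\<lambda>y. g y r s)) x"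
  by (rule smooth_schwarz[OF U_open g_smooth])

lemma D2_sym: "x \<in> U \<Longrightarrow> pd p (pd q (\<lambda>y. g y r s)) x = pd p (pd q (\<lambda>y. g y s r)) x"
  by (rule pd_local[OF U_open], assumption) (rule pd_gsym)

lemma riem_form: assumes x: "x \<in> U"
  shows "Riem g x i j k m =
    (1/2) * (pd i (pd j (\<lambda>y. g y m k)) x + pd i (pd m (\<lambda>y. g y j k)) x - pd i (pd k (\<lambda>y. g y j m)) x)
  - (1/2) * (pd j (pd i (\<lambda>y. g y m k)) x + pd j (pd m (\<lambda>y. g y i k)) x - pd j (pd k (\<lambda>y. g y i m)) x)
  + (\<Sum>a\<in>UNIV. christoffel g x a j k * (\<Sum>b\<in>UNIV. christoffel g x b i m * g x b a))
  - (\<Sum>a\<in>UNIV. christoffel g x a i k * (\<Sum>b\<in>UNIV. christoffel g x b j m * g x b a))"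
proof -
  have "Riem g x i j k m = (\<Sum>a\<in>UNIV. Kcurv g x a i j k * g x a m)" unfolding Riem_def ..
  also have "\<dots> = pd i (\<lambda>y. cov g (\<lambda>y a. g y a m) y j k) x - pd j (\<lambda>y. cov g (\<lambda>y a. g y a m) y i k) x
    + (\<Sum>a\<in>UNIV. christoffel g x a j k * cov g (\<lambda>y a. g y a m) x i a)
    - (\<Sum>a\<in>UNIV. christoffel g x a i k * cov g (\<lambda>y a. g y a m) x j a)"
    using ricci_id[OF x, of "\<lambda>y a. g y a m" i j k] g_smooth by simp
  finally show ?thesis unfolding pd_cov_g[OF x] cov_g1[OF x] .
qed

lemma riem_anti: assumes x: "x \<in> U"
  shows "Riem g x i j k m = - Riem g x i j m k"
proof -
  define D where "D p q r s = pd p (pd q (\<lambda>y. g y r s)) x" for p q r s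
  have Dsw: "\<And>p q r s. D p q r s = D q p r s" unfolding D_def by (rule D2_swap[OF x])
  have Dsy: "\<And>p q r s. D p q r s = D p q s r" unfolding D_def by (rule D2_sym[OF x])
  define Ga where "Ga a p q = christoffel g x a p q" for a p q
  have Q: "(\<Sum>a\<in>UNIV. Ga a j k * (\<Sum>b\<in>UNIV. Ga b i m * g x b a))
         - (\<Sum>a\<in>UNIV. Ga a i k * (\<Sum>b\<in>UNIV. Ga b j m * g x b a))
         + (\<Sum>a\<in>UNIV. Ga a j m * (\<Sum>b\<in>UNIV. Ga b i k * g x b a))
         - (\<Sum>a\<in>UNIV. Ga a i m * (\<Sum>b\<in>UNIV. Ga b j k * g x b a)) = 0"
  proof -
    have "(\<Sum>a\<in>UNIV. Ga a j k * (\<Sum>b\<in>UNIV. Ga b i m * g x b a))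
         - (\<Sum>a\<in>UNIV. Ga a i k * (\<Sum>b\<in>UNIV. Ga b j m * g x b a))
         + (\<Sum>a\<in>UNIV. Ga a j m * (\<Sum>b\<in>UNIV. Ga b i k * g x b a))
         - (\<Sum>a\<in>UNIV. Ga a i m * (\<Sum>b\<in>UNIV. Ga b j k * g x b a)) =
      (\<Sum>a\<in>UNIV. \<Sum>b\<in>UNIV. Ga a j k * Ga b i m * g x b a - Ga a i k * Ga b j m * g x b a
          + Ga a j m * Ga b i k * g x b a - Ga a i m * Ga b j k * g x b a)"
      by (simp add: sum_distrib_left sum.distrib sum_subtractf algebra_simps)
    also have "\<dots> = 0"
      by (rule antisym_sum) (simp add: gsym[OF x, of _ "_"] algebra_simps)
    finally show ?thesis .
  qed
  show ?thesis
    unfolding riem_form[OF x] D_def[symmetric] Ga_def[symmetric]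
    using Q Dsw[of j i m k] Dsw[of j i k m] Dsy[of i j k m]
    by (simp add: algebra_simps)
qed

end

context ST
begin

lemma dchr_sym: "x \<in> U \<Longrightarrow> pd l (\<lambda>y. christoffel g y a p q) x = pd l (\<lambda>y. christoffel g y a q p) x"
  by (rule pd_local[OF U_open], assumption) (rule chr_sym)

lemma K_anti12: "Kcurv g x a i j k = - Kcurv g x a j i k"
  unfolding Kcurv_def by (simp add: sum_subtractf algebra_simps)

lemma K_bianchi: assumes x: "x \<in> U"
  shows "Kcurv g x a i j k + Kcurv g x a j k i + Kcurv g x a k i j = 0"
proof -
  define Ga where "Ga a p q = christoffel g x a p q" for a p q
  define dG where "dG l a p q = pd l (\<lambda>y. christoffel g y a p q) x" for l a p q
  have s1: "\<And>a p q. Ga a p q = Ga a q p" unfolding Ga_def using chr_sym[OF x] by blast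
  have s2: "\<And>l a p q. dG l a p q = dG l a q p" unfolding dG_def using dchr_sym[OF x] by blast
  have "Kcurv g x a i j k + Kcurv g x a j k i + Kcurv g x a k i j =
    (- dG i a j k + dG j a i k - dG j a k i + dG k a j i - dG k a i j + dG i a k j)
    + (\<Sum>b\<in>UNIV. Ga b i k * Ga a j b - Ga b j k * Ga a i b + Ga b j i * Ga a k b - Ga b k i * Ga a j b
        + Ga b k j * Ga a i b - Ga b i j * Ga a k b)"
    unfolding Kcurv_def Ga_def dG_def by (simp add: sum.distrib sum_subtractf algebra_simps)
  also have "\<dots> = 0"
    using s2[of i a j k] s2[of j a k i] s2[of k a i j]
    by (simp add: s1[of _ i k] s1[of _ j k] s1[of _ i j])
  finally show ?thesis .
qed

lemma R_bianchi: "x \<in> U \<Longrightarrow> Riem g x i j k m + Riem g x j k i m + Riem g x k i j m = 0"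
  unfolding Riem_def
  by (simp add: sum.distrib[symmetric] distrib_right[symmetric] K_bianchi)

lemma R_anti12: "Riem g x i j k m = - Riem g x j i k m"
  unfolding Riem_def by (simp add: K_anti12[of _ _ i j] sum_negf)

lemma ric_sym: assumes x: "x \<in> U"
  shows "Ric g x j l = Ric g x l j"
proof -
  define G where "G i k = ginv g x i k" for i k
  have Gs: "\<And>i k. G i k = G k i" unfolding G_def using ginv_sym[OF x] by blast
  have z: "(\<Sum>i\<in>UNIV. \<Sum>k\<in>UNIV. G i k * Riem g x l j i k) = 0"
    apply (rule antisym_sum)
    subgoal for a b using riem_anti[OF x, of l j b a] Gs[of b a] by simp
    done
  have b: "\<And>i k. Riem g x i l j k + Riem g x l j i k + Riem g x j i l k = 0"
    using R_bianchi[OF x] by blast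
  have "Ric g x l j = (\<Sum>i\<in>UNIV. \<Sum>k\<in>UNIV. G i k * Riem g x i l k j)" unfolding Ric_def G_def ..
  also have "\<dots> = (\<Sum>i\<in>UNIV. \<Sum>k\<in>UNIV. - (G i k * Riem g x i l j k))"
    apply (intro sum.cong refl)
    subgoal for i k using riem_anti[OF x, of i l k j] by simp
    done
  also have "\<dots> = (\<Sum>i\<in>UNIV. \<Sum>k\<in>UNIV. G i k * Riem g x l j i k + G i k * Riem g x j i l k)"
    apply (intro sum.cong refl)
    subgoal for i k
    proof -
      have e: "Riem g x i l j k = -(Riem g x l j i k + Riem g x j i l k)" using b[of i k] by linarith
      show ?thesis unfolding e by (simp add: algebra_simps)
    qed
    done
  also have "\<dots> = (\<Sum>i\<in>UNIV. \<Sum>k\<in>UNIV. G i k * Riem g x j i l k)"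
    using z by (simp add: sum.distrib)
  also have "\<dots> = (\<Sum>i\<in>UNIV. \<Sum>k\<in>UNIV. G i k * Riem g x i j k l)"
    apply (intro sum.cong refl)
    subgoal for i k using R_anti12[of x j i l k] riem_anti[OF x, of i j l k] by simp
    done
  also have "\<dots> = Ric g x j l" unfolding Ric_def G_def ..
  finally show ?thesis by simp
qed

lemma lower_up: assumes x: "x \<in> U"
  shows "(\<Sum>m\<in>UNIV. g x a m * up g X x m) = X x a"
proof -
  have "(\<Sum>m\<in>UNIV. g x a m * up g X x m) = (\<Sum>m\<in>UNIV. \<Sum>l\<in>UNIV. g x a m * ginv g x m l * X x l)"
    by (simp add: up_def sum_distrib_left mult.assoc)
  also have "\<dots> = (\<Sum>l\<in>UNIV. \<Sum>m\<in>UNIV. g x a m * ginv g x m l * X x l)" by (rule sum.swap)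
  also have "\<dots> = (\<Sum>l\<in>UNIV. (\<Sum>m\<in>UNIV. g x a m * ginv g x m l) * X x l)"
    by (simp add: sum_distrib_right)
  also have "\<dots> = (\<Sum>l\<in>UNIV. if l = a then X x l else 0)"
    by (intro sum.cong refl) (simp add: ginv_right[OF x])
  also have "\<dots> = X x a" by simp
  finally show ?thesis .
qed

lemma riem_up: assumes x: "x \<in> U"
  shows "(\<Sum>m\<in>UNIV. Riem g x i j k m * up g X x m) = (\<Sum>a\<in>UNIV. Kcurv g x a i j k * X x a)"
proof -
  have "(\<Sum>m\<in>UNIV. Riem g x i j k m * up g X x m) =
     (\<Sum>m\<in>UNIV. \<Sum>a\<in>UNIV. Kcurv g x a i j k * (g x a m * up g X x m))"
    unfolding Riem_def by (simp add: sum_distrib_right mult.assoc)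
  also have "\<dots> = (\<Sum>a\<in>UNIV. \<Sum>m\<in>UNIV. Kcurv g x a i j k * (g x a m * up g X x m))"
    by (rule sum.swap)
  also have "\<dots> = (\<Sum>a\<in>UNIV. Kcurv g x a i j k * X x a)"
    by (simp add: sum_distrib_left[symmetric] lower_up[OF x])
  finally show ?thesis .
qed

end

context ST
begin

lemma torse:
  assumes x: "x \<in> U" and X: "\<And>k. smooth_on_set U (\<lambda>y. X y k)" and fd: "f differentiable (at x)"
    and cv: "\<And>y i j. y \<in> U \<Longrightarrow> cov g X y i j = f y * (X y i * X y j + g y i j)"
  shows "(\<Sum>m\<in>UNIV. Riem g x i j k m * up g X x m) =
    pd i f x * (X x j * X x k + g x j k) - pd j f x * (X x i * X x k + g x i k)
    + (f x)^2 * (X x j * g x i k - X x i * g x j k)"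
proof -
  have dX: "\<And>a. (\<lambda>y. X y a) differentiable (at x)" using smooth_d0[OF X x] .
  define GX where "GX p q = (\<Sum>b\<in>UNIV. christoffel g x b p q * X x b)" for p q
  define Gg where "Gg p q r = (\<Sum>a\<in>UNIV. christoffel g x a p q * g x a r)" for p q r
  have GXs: "\<And>p q. GX p q = GX q p" unfolding GX_def using chr_sym[OF x] by simp
  have Ggs: "\<And>p q r. Gg p q r = Gg q p r" unfolding Gg_def using chr_sym[OF x] by simp
  have pN: "\<And>p q r. pd p (\<lambda>y. cov g X y q r) x = pd p f x * (X x q * X x r + g x q r)
     + f x * (pd p (\<lambda>y. X y q) x * X x r + X x q * pd p (\<lambda>y. X y r) x + pd p (\<lambda>y. g y q r) x)"
  proof -
    fix p q r
    have "pd p (\<lambda>y. cov g X y q r) x = pd p (\<lambda>y. f y * (X y q * X y r + g y q r)) x"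
      by (rule pd_local[OF U_open x]) (rule cv)
    also have "\<dots> = pd p f x * (X x q * X x r + g x q r) + f x * pd p (\<lambda>y. X y q * X y r + g y q r) x"
      by (rule pd_mult[OF fd]) (intro differentiable_add differentiable_mult dX g_d0[OF x])
    also have "pd p (\<lambda>y. X y q * X y r + g y q r) x = pd p (\<lambda>y. X y q * X y r) x + pd p (\<lambda>y. g y q r) x"
      by (rule pd_add) (intro differentiable_add differentiable_mult dX g_d0[OF x])+
    also have "pd p (\<lambda>y. X y q * X y r) x = pd p (\<lambda>y. X y q) x * X x r + X x q * pd p (\<lambda>y. X y r) x"
      by (rule pd_mult[OF dX dX])
    finally show "pd p (\<lambda>y. cov g X y q r) x = pd p f x * (X x q * X x r + g x q r)
     + f x * (pd p (\<lambda>y. X y q) x * X x r + X x q * pd p (\<lambda>y. X y r) x + pd p (\<lambda>y. g y q r) x)"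
      by simp
  qed
  have dXe: "\<And>p q. pd p (\<lambda>y. X y q) x = f x * (X x p * X x q + g x p q) + GX p q"
    using cv[OF x] unfolding cov_def GX_def by (metis diff_add_cancel)
  have dge: "\<And>p q r. pd p (\<lambda>y. g y q r) x = Gg p q r + Gg p r q"
    unfolding Gg_def using compat[OF x] by simp
  have cN: "\<And>p q r. (\<Sum>a\<in>UNIV. christoffel g x a q r * cov g X x p a) = f x * (X x p * GX q r + Gg q r p)"
  proof -
    fix p q r
    have "(\<Sum>a\<in>UNIV. christoffel g x a q r * cov g X x p a) =
       (\<Sum>a\<in>UNIV. f x * (X x p * (christoffel g x a q r * X x a) + christoffel g x a q r * g x a p))"
      by (intro sum.cong refl) (simp add: cv[OF x] gsym[OF x, of p] algebra_simps)
    also have "\<dots> = f x * (X x p * GX q r + Gg q r p)"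
      unfolding GX_def Gg_def by (simp add: sum_distrib_left sum.distrib distrib_left)
    finally show "(\<Sum>a\<in>UNIV. christoffel g x a q r * cov g X x p a) = f x * (X x p * GX q r + Gg q r p)" .
  qed
  have "(\<Sum>m\<in>UNIV. Riem g x i j k m * up g X x m) = (\<Sum>a\<in>UNIV. Kcurv g x a i j k * X x a)"
    by (rule riem_up[OF x])
  also have "\<dots> = pd i (\<lambda>y. cov g X y j k) x - pd j (\<lambda>y. cov g X y i k) x
    + (\<Sum>a\<in>UNIV. christoffel g x a j k * cov g X x i a)
    - (\<Sum>a\<in>UNIV. christoffel g x a i k * cov g X x j a)"
    by (rule ricci_id[OF x X])
  also have "\<dots> = pd i f x * (X x j * X x k + g x j k) - pd j f x * (X x i * X x k + g x i k)
    + (f x)^2 * (X x j * g x i k - X x i * g x j k)"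
    unfolding pN cN dXe dge
    using GXs[of i j] Ggs[of i j k] gsym[OF x, of i j]
    by (simp add: algebra_simps power2_eq_square)
  finally show ?thesis .
qed

end

definition upv :: "'n::finite metric \<Rightarrow> real^'n \<Rightarrow> ('n \<Rightarrow> real) \<Rightarrow> 'n \<Rightarrow> real" where
  "upv g x X k = (\<Sum>l\<in>UNIV. ginv g x k l * X l)"

definition dotv :: "'n::finite metric \<Rightarrow> real^'n \<Rightarrow> ('n \<Rightarrow> real) \<Rightarrow> ('n \<Rightarrow> real) \<Rightarrow> real" where
  "dotv g x X Y = (\<Sum>k\<in>UNIV. upv g x X k * Y k)"

definition Pg :: "'n::finite metric \<Rightarrow> real^'n \<Rightarrow> ('n \<Rightarrow> real) \<Rightarrow> ('n \<Rightarrow> real) \<Rightarrow> real \<Rightarrow> 'n \<Rightarrow> 'n \<Rightarrow> 'n \<Rightarrow> real" where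
  "Pg g x X D f i j k = D i * (X j * X k + g x j k) - D j * (X i * X k + g x i k) + f^2 * (X j * g x i k - X i * g x j k)"

lemma up_eq: "up g X x = upv g x (X x)"
  unfolding up_def upv_def by (simp add: fun_eq_iff)

context ST
begin

lemma dot_sym: assumes x: "x \<in> U" shows "dotv g x X Y = dotv g x Y X"
proof -
  have "dotv g x X Y = (\<Sum>k\<in>UNIV. \<Sum>l\<in>UNIV. ginv g x k l * X l * Y k)"
    unfolding dotv_def upv_def by (simp add: sum_distrib_right)
  also have "\<dots> = (\<Sum>l\<in>UNIV. \<Sum>k\<in>UNIV. ginv g x k l * X l * Y k)" by (rule sum.swap)
  also have "\<dots> = (\<Sum>l\<in>UNIV. (\<Sum>k\<in>UNIV. ginv g x l k * Y k) * X l)"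
    apply (intro sum.cong refl)
    subgoal for l by (simp add: sum_distrib_left sum_distrib_right ginv_sym[OF x, of l] mult_ac)
    done
  also have "\<dots> = dotv g x Y X"
    unfolding dotv_def upv_def ..
  finally show ?thesis .
qed

lemma upv_g: assumes x: "x \<in> U" shows "(\<Sum>r\<in>UNIV. upv g x Y r * g x r k) = Y k"
proof -
  have "(\<Sum>r\<in>UNIV. upv g x Y r * g x r k) = (\<Sum>r\<in>UNIV. g x k r * up g (\<lambda>_. Y) x r)"
    unfolding up_eq by (simp add: gsym[OF x, of k] mult.commute)
  also have "\<dots> = Y k" by (rule lower_up[OF x])
  finally show ?thesis .
qed

lemma upv_lin: "upv g x (\<lambda>i. a * X i + b * Y i) k = a * upv g x X k + b * upv g x Y k"
  unfolding upv_def by (simp add: sum.distrib sum_distrib_left algebra_simps)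

lemma dot_lin1: "dotv g x (\<lambda>i. a * X i + b * Y i) Z = a * dotv g x X Z + b * dotv g x Y Z"
  unfolding dotv_def upv_lin by (simp add: sum.distrib sum_distrib_left algebra_simps)

lemma dot_lin2: "dotv g x Z (\<lambda>i. a * X i + b * Y i) = a * dotv g x Z X + b * dotv g x Z Y"
  unfolding dotv_def by (simp add: sum.distrib sum_distrib_left algebra_simps)

lemma tr_g: assumes x: "x \<in> U" shows "(\<Sum>a\<in>UNIV. \<Sum>k\<in>UNIV. ginv g x a k * g x a k) = real CARD('n)"
proof -
  have "\<And>a. (\<Sum>k\<in>UNIV. ginv g x a k * g x a k) = 1"
  proof -
    fix a
    have "(\<Sum>k\<in>UNIV. ginv g x a k * g x a k) = (\<Sum>k\<in>UNIV. ginv g x a k * g x k a)"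
      by (intro sum.cong refl) (simp add: gsym[OF x, of a])
    then show "(\<Sum>k\<in>UNIV. ginv g x a k * g x a k) = 1" using ginv_left[OF x, of a a] by simp
  qed
  then show ?thesis by simp
qed

lemma tr_Xg: assumes x: "x \<in> U" shows "(\<Sum>a\<in>UNIV. \<Sum>k\<in>UNIV. ginv g x a k * (X a * g x i k)) = X i"
proof -
  have "(\<Sum>a\<in>UNIV. \<Sum>k\<in>UNIV. ginv g x a k * (X a * g x i k)) =
        (\<Sum>a\<in>UNIV. X a * (\<Sum>k\<in>UNIV. ginv g x a k * g x k i))"
    by (simp add: sum_distrib_left gsym[OF x, of i] mult_ac)
  also have "\<dots> = (\<Sum>a\<in>UNIV. if a = i then X a else 0)"
    by (intro sum.cong refl) (simp add: ginv_left[OF x])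
  finally show ?thesis by simp
qed

lemma tr_gX: assumes x: "x \<in> U" shows "(\<Sum>a\<in>UNIV. \<Sum>k\<in>UNIV. ginv g x a k * (g x a i * X k)) = X i"
proof -
  have "(\<Sum>a\<in>UNIV. \<Sum>k\<in>UNIV. ginv g x a k * (g x a i * X k)) =
        (\<Sum>k\<in>UNIV. \<Sum>a\<in>UNIV. ginv g x a k * (g x a i * X k))" by (rule sum.swap)
  also have "\<dots> = (\<Sum>k\<in>UNIV. \<Sum>a\<in>UNIV. ginv g x k a * (X k * g x i a))"
    apply (intro sum.cong refl)
    subgoal for k a using ginv_sym[OF x, of a k] gsym[OF x, of a i] by simp
    done
  also have "\<dots> = X i" by (rule tr_Xg[OF x])
  finally show ?thesis .
qed

lemma tr_XY: "(\<Sum>a\<in>UNIV. \<Sum>k\<in>UNIV. ginv g x a k * (X a * Y k)) = dotv g x Y X"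
  unfolding dotv_def upv_def by (simp add: sum_distrib_right sum_distrib_left mult_ac)

end

context ST
begin

lemma upv_g2: assumes x: "x \<in> U" shows "(\<Sum>r\<in>UNIV. upv g x Y r * g x k r) = Y k"
  using upv_g[OF x, of Y k] gsym[OF x, of k] by simp

lemma C1: assumes x: "x \<in> U"
  shows "(\<Sum>r\<in>UNIV. upv g x Y r * Pg g x X D f r j k) =
    dotv g x Y D * (X j * X k + g x j k) - D j * (dotv g x Y X * X k + Y k)
    + f^2 * (X j * Y k - dotv g x Y X * g x j k)"
proof -
  have "(\<Sum>r\<in>UNIV. upv g x Y r * Pg g x X D f r j k) =
    (\<Sum>r\<in>UNIV. upv g x Y r * D r) * (X j * X k + g x j k)
    - D j * ((\<Sum>r\<in>UNIV. upv g x Y r * X r) * X k + (\<Sum>r\<in>UNIV. upv g x Y r * g x r k))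
    + f^2 * (X j * (\<Sum>r\<in>UNIV. upv g x Y r * g x r k) - (\<Sum>r\<in>UNIV. upv g x Y r * X r) * g x j k)"
    unfolding Pg_def
    by (simp add: algebra_simps sum.distrib sum_subtractf sum_distrib_left sum_distrib_right)
  then show ?thesis unfolding upv_g[OF x] dotv_def[symmetric] .
qed

lemma C3: assumes x: "x \<in> U"
  shows "(\<Sum>k\<in>UNIV. upv g x Y k * Pg g x X D f i j k) =
    D i * (dotv g x Y X * X j + Y j) - D j * (dotv g x Y X * X i + Y i)
    + f^2 * (X j * Y i - X i * Y j)"
proof -
  have "(\<Sum>k\<in>UNIV. upv g x Y k * Pg g x X D f i j k) =
    D i * ((\<Sum>k\<in>UNIV. upv g x Y k * X k) * X j + (\<Sum>k\<in>UNIV. upv g x Y k * g x j k))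
    - D j * ((\<Sum>k\<in>UNIV. upv g x Y k * X k) * X i + (\<Sum>k\<in>UNIV. upv g x Y k * g x i k))
    + f^2 * (X j * (\<Sum>k\<in>UNIV. upv g x Y k * g x i k) - X i * (\<Sum>k\<in>UNIV. upv g x Y k * g x j k))"
    unfolding Pg_def
    by (simp add: algebra_simps sum.distrib sum_subtractf sum_distrib_left sum_distrib_right)
  then show ?thesis unfolding upv_g2[OF x] dotv_def[symmetric] .
qed

lemma C2: assumes x: "x \<in> U"
  shows "(\<Sum>a\<in>UNIV. \<Sum>k\<in>UNIV. ginv g x a k * Pg g x X D f a i k) =
    dotv g x X D * X i + D i - D i * (dotv g x X X + real CARD('n))
    + f^2 * (real CARD('n) * X i - X i)"
proof -
  have "(\<Sum>a\<in>UNIV. \<Sum>k\<in>UNIV. ginv g x a k * Pg g x X D f a i k) =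
    (\<Sum>a\<in>UNIV. \<Sum>k\<in>UNIV. ginv g x a k * (D a * X k)) * X i
    + (\<Sum>a\<in>UNIV. \<Sum>k\<in>UNIV. ginv g x a k * (D a * g x i k))
    - D i * ((\<Sum>a\<in>UNIV. \<Sum>k\<in>UNIV. ginv g x a k * (X a * X k)) + (\<Sum>a\<in>UNIV. \<Sum>k\<in>UNIV. ginv g x a k * g x a k))
    + f^2 * ((\<Sum>a\<in>UNIV. \<Sum>k\<in>UNIV. ginv g x a k * g x a k) * X i - (\<Sum>a\<in>UNIV. \<Sum>k\<in>UNIV. ginv g x a k * (X a * g x i k)))"
    unfolding Pg_def
    by (simp add: algebra_simps sum.distrib sum_subtractf sum_distrib_left sum_distrib_right)
  then show ?thesis unfolding tr_Xg[OF x] tr_g[OF x] unfolding tr_XY by simp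
qed

end

lemma dotv_add: "dotv g x Y (\<lambda>j. A j + B j) = dotv g x Y A + dotv g x Y B"
  unfolding dotv_def by (simp add: sum.distrib algebra_simps)
lemma dotv_diff: "dotv g x Y (\<lambda>j. A j - B j) = dotv g x Y A - dotv g x Y B"
  unfolding dotv_def by (simp add: sum_subtractf algebra_simps)
lemma dotv_minus: "dotv g x Y (\<lambda>j. - A j) = - dotv g x Y A"
  unfolding dotv_def by (simp add: sum_negf)
lemma dotv_cl: "dotv g x Y (\<lambda>j. c * A j) = c * dotv g x Y A"
  unfolding dotv_def sum_distrib_left by (simp add: mult_ac)
lemma dotv_cr: "dotv g x Y (\<lambda>j. A j * c) = dotv g x Y A * c"
  unfolding dotv_def sum_distrib_right by (simp add: mult_ac)
lemma dotv_div: "dotv g x Y (\<lambda>j. A j / c) = dotv g x Y A / c"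
  unfolding dotv_def by (simp add: sum_divide_distrib)

lemma upv_add: "upv g x (\<lambda>j. A j + B j) k = upv g x A k + upv g x B k"
  unfolding upv_def by (simp add: sum.distrib algebra_simps)
lemma upv_cl: "upv g x (\<lambda>j. c * A j) k = c * upv g x A k"
  unfolding upv_def sum_distrib_left by (simp add: mult_ac)

lemma dotv1_add: "dotv g x (\<lambda>j. A j + B j) Y = dotv g x A Y + dotv g x B Y"
  unfolding dotv_def upv_add by (simp add: sum.distrib algebra_simps)
lemma dotv1_cl: "dotv g x (\<lambda>j. c * A j) Y = c * dotv g x A Y"
  unfolding dotv_def upv_cl sum_distrib_left by (simp add: mult_ac)

lemmas dot_simps = dotv_add dotv_diff dotv_minus dotv_cl dotv_cr dotv_div dotv1_add dotv1_cl

lemma sep: fixes P C :: "'a \<Rightarrow> real" and Q D :: "'b \<Rightarrow> real"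
  shows "(\<Sum>r\<in>A. \<Sum>s\<in>B. P r * Q s * (C r * D s)) = (\<Sum>r\<in>A. P r * C r) * (\<Sum>s\<in>B. Q s * D s)"
  by (subst sum_product) (simp add: mult_ac)

context ST
begin

lemma ricY: assumes x: "x \<in> U"
  shows "(\<Sum>s\<in>UNIV. Ric g x i s * upv g x Y s) =
    (\<Sum>a\<in>UNIV. \<Sum>k\<in>UNIV. ginv g x a k * (\<Sum>s\<in>UNIV. Riem g x a i k s * upv g x Y s))"
proof -
  have "(\<Sum>s\<in>UNIV. Ric g x i s * upv g x Y s) =
     (\<Sum>s\<in>UNIV. \<Sum>a\<in>UNIV. \<Sum>k\<in>UNIV. ginv g x a k * Riem g x a i k s * upv g x Y s)"
    unfolding Ric_def by (simp add: sum_distrib_right)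
  also have "\<dots> = (\<Sum>a\<in>UNIV. \<Sum>s\<in>UNIV. \<Sum>k\<in>UNIV. ginv g x a k * Riem g x a i k s * upv g x Y s)"
    by (rule sum.swap)
  also have "\<dots> = (\<Sum>a\<in>UNIV. \<Sum>k\<in>UNIV. \<Sum>s\<in>UNIV. ginv g x a k * Riem g x a i k s * upv g x Y s)"
    by (rule sum.cong[OF refl], rule sum.swap)
  also have "\<dots> = (\<Sum>a\<in>UNIV. \<Sum>k\<in>UNIV. ginv g x a k * (\<Sum>s\<in>UNIV. Riem g x a i k s * upv g x Y s))"
    by (simp add: sum_distrib_left mult.assoc)
  finally show ?thesis .
qed

lemma W1: assumes x: "x \<in> U" and n3: "CARD('n) > 2"
  shows "(\<Sum>r\<in>UNIV. \<Sum>s\<in>UNIV. upv g x Y r * upv g x Y s * Weyl g x r i j s) =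
    (\<Sum>r\<in>UNIV. upv g x Y r * (\<Sum>s\<in>UNIV. Riem g x r i j s * upv g x Y s))
    - (Y j * (\<Sum>s\<in>UNIV. Ric g x i s * upv g x Y s) - dotv g x Y Y * Ric g x i j
       - g x i j * dotv g x Y (\<lambda>r. \<Sum>s\<in>UNIV. Ric g x r s * upv g x Y s)
       + Y i * (\<Sum>s\<in>UNIV. Ric g x j s * upv g x Y s)) / (real CARD('n) - 2)
    + Scal g x * (Y i * Y j - dotv g x Y Y * g x i j) / ((real CARD('n) - 1) * (real CARD('n) - 2))"
proof -
  define N2 where "N2 = real CARD('n) - 2"
  define N12 where "N12 = (real CARD('n) - 1) * N2"
  define Y' where "Y' = upv g x Y"
  define Sc where "Sc = Scal g x"
  have nz: "N2 \<noteq> 0" "N12 \<noteq> 0" "real CARD('n) - 2 \<noteq> 0" "real CARD('n) - 1 \<noteq> 0"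
    using n3 by (auto simp: N2_def N12_def)
  have Wd: "\<And>r s. Weyl g x r i j s = Riem g x r i j s
     - (1/N2) * (g x r j * Ric g x i s) + (1/N2) * (g x r s * Ric g x i j)
     + (1/N2) * (g x i j * Ric g x r s) - (1/N2) * (g x i s * Ric g x r j)
     + (Sc/N12) * (g x r j * g x i s) - (Sc/N12) * (g x r s * g x i j)"
    unfolding Weyl_def N12_def N2_def Sc_def by (simp add: divide_inverse algebra_simps)
  have "(\<Sum>r\<in>UNIV. \<Sum>s\<in>UNIV. Y' r * Y' s * Weyl g x r i j s) =
     (\<Sum>r\<in>UNIV. \<Sum>s\<in>UNIV. Y' r * Y' s * Riem g x r i j s)
     - (1/N2) * (\<Sum>r\<in>UNIV. \<Sum>s\<in>UNIV. Y' r * Y' s * (g x r j * Ric g x i s))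
     + (1/N2) * (\<Sum>r\<in>UNIV. \<Sum>s\<in>UNIV. Y' r * Y' s * (g x r s * Ric g x i j))
     + (1/N2) * (\<Sum>r\<in>UNIV. \<Sum>s\<in>UNIV. Y' r * Y' s * (g x i j * Ric g x r s))
     - (1/N2) * (\<Sum>r\<in>UNIV. \<Sum>s\<in>UNIV. Y' r * Y' s * (Ric g x r j * g x i s))
     + (Sc/N12) * (\<Sum>r\<in>UNIV. \<Sum>s\<in>UNIV. Y' r * Y' s * (g x r j * g x i s))
     - (Sc/N12) * (\<Sum>r\<in>UNIV. \<Sum>s\<in>UNIV. Y' r * Y' s * (g x r s * g x i j))"
    unfolding Wd by (simp add: algebra_simps sum.distrib sum_subtractf sum_distrib_left)
  also have "(\<Sum>r\<in>UNIV. \<Sum>s\<in>UNIV. Y' r * Y' s * Riem g x r i j s) =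
     (\<Sum>r\<in>UNIV. Y' r * (\<Sum>s\<in>UNIV. Riem g x r i j s * Y' s))"
    by (simp add: sum_distrib_left mult_ac)
  also have "(\<Sum>r\<in>UNIV. \<Sum>s\<in>UNIV. Y' r * Y' s * (g x r j * Ric g x i s)) =
     Y j * (\<Sum>s\<in>UNIV. Ric g x i s * Y' s)"
    unfolding sep Y'_def upv_g[OF x] by (simp add: mult_ac)
  also have "(\<Sum>r\<in>UNIV. \<Sum>s\<in>UNIV. Y' r * Y' s * (g x r s * Ric g x i j)) = dotv g x Y Y * Ric g x i j"
  proof -
    have "(\<Sum>r\<in>UNIV. \<Sum>s\<in>UNIV. Y' r * Y' s * (g x r s * Ric g x i j)) =
       (\<Sum>r\<in>UNIV. Y' r * (\<Sum>s\<in>UNIV. Y' s * g x r s)) * Ric g x i j"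
      by (simp add: sum_distrib_left sum_distrib_right mult_ac)
    then show ?thesis unfolding Y'_def upv_g2[OF x] dotv_def by simp
  qed
  also have "(\<Sum>r\<in>UNIV. \<Sum>s\<in>UNIV. Y' r * Y' s * (g x i j * Ric g x r s)) =
     g x i j * dotv g x Y (\<lambda>r. \<Sum>s\<in>UNIV. Ric g x r s * Y' s)"
    unfolding dotv_def Y'_def by (simp add: sum_distrib_left sum_distrib_right mult_ac)
  also have "(\<Sum>r\<in>UNIV. \<Sum>s\<in>UNIV. Y' r * Y' s * (Ric g x r j * g x i s)) =
     (\<Sum>r\<in>UNIV. Y' r * Ric g x r j) * Y i"
    unfolding sep Y'_def upv_g2[OF x] ..
  also have "(\<Sum>r\<in>UNIV. Y' r * Ric g x r j) = (\<Sum>s\<in>UNIV. Ric g x j s * Y' s)"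
    by (intro sum.cong refl) (simp add: ric_sym[OF x, of _ j] mult.commute)
  also have "(\<Sum>r\<in>UNIV. \<Sum>s\<in>UNIV. Y' r * Y' s * (g x r j * g x i s)) = Y j * Y i"
    unfolding sep Y'_def upv_g[OF x] upv_g2[OF x] ..
  also have "(\<Sum>r\<in>UNIV. \<Sum>s\<in>UNIV. Y' r * Y' s * (g x r s * g x i j)) = dotv g x Y Y * g x i j"
  proof -
    have "(\<Sum>r\<in>UNIV. \<Sum>s\<in>UNIV. Y' r * Y' s * (g x r s * g x i j)) =
       (\<Sum>r\<in>UNIV. Y' r * (\<Sum>s\<in>UNIV. Y' s * g x r s)) * g x i j"
      by (simp add: sum_distrib_left sum_distrib_right mult_ac)
    then show ?thesis unfolding Y'_def upv_g2[OF x] dotv_def by simp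
  qed
  finally show ?thesis unfolding Y'_def[symmetric] Sc_def[symmetric] N2_def[symmetric] N12_def[symmetric]
    by (simp add: divide_inverse algebra_simps)
qed

end

lemma dotv_zero: "dotv g x Y (\<lambda>j. 0) = 0"
  unfolding dotv_def by simp

context ST
begin

lemma anti_contr:
  assumes x: "x \<in> U"
  shows "(\<Sum>k\<in>UNIV. upv g x A k * (\<Sum>m\<in>UNIV. Riem g x i j k m * upv g x B m)) =
    - (\<Sum>m\<in>UNIV. upv g x B m * (\<Sum>k\<in>UNIV. Riem g x i j m k * upv g x A k))"
proof -
  have "(\<Sum>k\<in>UNIV. upv g x A k * (\<Sum>m\<in>UNIV. Riem g x i j k m * upv g x B m)) =
     (\<Sum>k\<in>UNIV. \<Sum>m\<in>UNIV. - (upv g x B m * (Riem g x i j m k * upv g x A k)))"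
    unfolding sum_distrib_left
    apply (intro sum.cong refl)
    subgoal for k m using riem_anti[OF x, of i j k m] by (simp add: mult_ac)
    done
  also have "\<dots> = (\<Sum>m\<in>UNIV. \<Sum>k\<in>UNIV. - (upv g x B m * (Riem g x i j m k * upv g x A k)))"
    by (rule sum.swap)
  also have "\<dots> = - (\<Sum>m\<in>UNIV. upv g x B m * (\<Sum>k\<in>UNIV. Riem g x i j m k * upv g x A k))"
    by (simp add: sum_distrib_left sum_negf)
  finally show ?thesis .
qed

lemma C1d: assumes x: "x \<in> U"
  shows "dotv g x Y (\<lambda>r. Pg g x X D f r j k) =
    dotv g x Y D * (X j * X k + g x j k) - D j * (dotv g x Y X * X k + Y k)
    + f^2 * (X j * Y k - dotv g x Y X * g x j k)"
  using C1[OF x] unfolding dotv_def .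

lemma dgk: assumes x: "x \<in> U" shows "dotv g x Y (g x k) = Y k"
  using upv_g2[OF x] unfolding dotv_def .

lemma ric_contr:
  assumes x: "x \<in> U"
  shows "dotv g x A (\<lambda>k. dotv g x B (Ric g x k)) = dotv g x B (\<lambda>k. dotv g x A (Ric g x k))"
proof -
  have "dotv g x A (\<lambda>k. dotv g x B (Ric g x k)) =
      (\<Sum>k\<in>UNIV. \<Sum>s\<in>UNIV. upv g x A k * upv g x B s * Ric g x k s)"
    unfolding dotv_def by (simp add: sum_distrib_left mult_ac)
  also have "\<dots> = (\<Sum>s\<in>UNIV. \<Sum>k\<in>UNIV. upv g x A k * upv g x B s * Ric g x k s)" by (rule sum.swap)
  also have "\<dots> = dotv g x B (\<lambda>k. dotv g x A (Ric g x k))"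
    unfolding dotv_def by (simp add: sum_distrib_left ric_sym[OF x] mult_ac)
  finally show ?thesis .
qed

end

lemma dotv_comm_def: "dotv g x Y (Ric g x k) = (\<Sum>s\<in>UNIV. Ric g x k s * upv g x Y s)"
  unfolding dotv_def by (simp add: mult.commute)

theorem mainTheorem10:
  fixes U :: "(real^'n::finite) set"
    and g :: "'n metric"
    and u w b :: "'n covf"
    and \<phi> lam v \<alpha> :: "real^'n \<Rightarrow> real"
  assumes dim: "CARD('n) > 3"
    and U_open: "open U"
    and g_smooth: "\<And>i j. smooth_on_set U (\<lambda>x. g x i j)"
    and g_lor: "\<And>x. x \<in> U \<Longrightarrow> lorentzian_form (g x)"
    and u_smooth: "\<And>i. smooth_on_set U (\<lambda>x. u x i)"
    and w_smooth: "\<And>i. smooth_on_set U (\<lambda>x. w x i)"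
    and phi_smooth: "smooth_on_set U \<phi>"
    and lam_smooth: "smooth_on_set U lam"
    and noncollinear: "\<And>x. x \<in> U \<Longrightarrow> \<not> (\<exists>c. \<forall>i. w x i = c * u x i)"
    and u_unit: "\<And>x. x \<in> U \<Longrightarrow> (\<Sum>k\<in>UNIV. up g u x k * u x k) = -1"
    and w_unit: "\<And>x. x \<in> U \<Longrightarrow> (\<Sum>k\<in>UNIV. up g w x k * w x k) = -1"
    and u_cov: "\<And>x i j. x \<in> U \<Longrightarrow> cov g u x i j = \<phi> x * (u x i * u x j + g x i j)"
    and w_cov: "\<And>x i j. x \<in> U \<Longrightarrow> cov g w x i j = lam x * (w x i * w x j + g x i j)"
    and dphi: "\<And>x k. x \<in> U \<Longrightarrow>
        pd k \<phi> x = - u x k * (\<Sum>m\<in>UNIV. up g u x m * pd m \<phi> x) + v x * b x k"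
    and v_nz: "\<And>x. x \<in> U \<Longrightarrow> v x \<noteq> 0"
    and b_unit: "\<And>x. x \<in> U \<Longrightarrow> (\<Sum>k\<in>UNIV. up g b x k * b x k) = 1"
    and ub: "\<And>x. x \<in> U \<Longrightarrow> (\<Sum>k\<in>UNIV. up g u x k * b x k) = 0"
    and w_def: "\<And>x i. x \<in> U \<Longrightarrow> w x i = u x i * cosh (\<alpha> x) + b x i * sinh (\<alpha> x)"
    and alpha_nz: "\<And>x. x \<in> U \<Longrightarrow> \<alpha> x \<noteq> 0"
  shows "\<forall>x\<in>U. \<forall>i j.
     (\<Sum>r\<in>UNIV. \<Sum>s\<in>UNIV. (up g u x r * up g u x s + up g b x r * up g b x s) * Weyl g x r i j s)
     = (u x i * u x j + b x i * b x j) *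
       (\<Sum>k\<in>UNIV. \<Sum>l\<in>UNIV. up g b x k * up g b x l * Eweyl g u x k l)"
proof (intro ballI allI)
  interpret ST U g by unfold_locales (rule U_open g_smooth g_lor)+
  fix x i j assume x: "x \<in> U"
  define uu where "uu = u x"
  define bb where "bb = b x"
  define ww where "ww = w x"
  define c where "c = cosh (\<alpha> x)"
  define s where "s = sinh (\<alpha> x)"
  define F where "F = (\<lambda>k. pd k \<phi> x)"
  define L where "L = (\<lambda>k. pd k lam x)"
  define q where "q = dotv g x uu F"
  define v0 where "v0 = v x"
  define p0 where "p0 = \<phi> x"
  define l0 where "l0 = lam x"
  define N where "N = real CARD('n)"
  have hs: "s \<noteq> 0" using alpha_nz[OF x] by (simp add: s_def)
  have hcs: "c^2 = 1 + s^2" unfolding c_def s_def cosh_square_eq[of "\<alpha> x"] by simp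
  have hN: "N - 2 \<noteq> 0" "N - 1 \<noteq> 0" using dim by (auto simp: N_def)
  have duu: "dotv g x uu uu = -1" using u_unit[OF x] by (simp add: up_eq dotv_def uu_def)
  have dbb: "dotv g x bb bb = 1" using b_unit[OF x] by (simp add: up_eq dotv_def bb_def)
  have dub: "dotv g x uu bb = 0" using ub[OF x] by (simp add: up_eq dotv_def uu_def bb_def)
  have dbu: "dotv g x bb uu = 0" using dub dot_sym[OF x] by simp
  have hw: "ww = (\<lambda>k. c * uu k + s * bb k)"
    unfolding ww_def uu_def bb_def c_def s_def by (rule ext) (simp add: w_def[OF x] mult.commute)
  have hF: "F = (\<lambda>k. (- q) * uu k + v0 * bb k)"
  proof (rule ext)
    fix k
    have "pd k \<phi> x = - u x k * (\<Sum>m\<in>UNIV. up g u x m * pd m \<phi> x) + v x * b x k" by (rule dphi[OF x])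
    then show "F k = (- q) * uu k + v0 * bb k"
      unfolding F_def q_def uu_def bb_def v0_def dotv_def up_eq by simp
  qed
  have hb: "bb = (\<lambda>k. (1/s) * ww k + (- c / s) * uu k)"
    unfolding hw using hs by (auto simp: fun_eq_iff field_simps)
  have Pu: "\<And>i j k. (\<Sum>m\<in>UNIV. Riem g x i j k m * upv g x uu m) = Pg g x uu F p0 i j k"
    using torse[OF x u_smooth smooth_d0[OF phi_smooth x] u_cov]
    by (simp add: up_eq uu_def Pg_def F_def p0_def)
  have Pw: "\<And>i j k. (\<Sum>m\<in>UNIV. Riem g x i j k m * upv g x ww m) = Pg g x ww L l0 i j k"
    using torse[OF x w_smooth smooth_d0[OF lam_smooth x] w_cov]
    by (simp add: up_eq ww_def Pg_def L_def l0_def)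
  have upb: "upv g x bb = (\<lambda>m. (1/s) * upv g x ww m + (- c / s) * upv g x uu m)"
    by (subst hb, rule ext) (simp only: upv_add upv_cl)
  have Pb: "\<And>i j k. (\<Sum>m\<in>UNIV. Riem g x i j k m * upv g x bb m) =
      (1/s) * Pg g x ww L l0 i j k + (- c / s) * Pg g x uu F p0 i j k"
  proof -
    fix i j k
    have "(\<Sum>m\<in>UNIV. Riem g x i j k m * upv g x bb m) =
      (1/s) * (\<Sum>m\<in>UNIV. Riem g x i j k m * upv g x ww m) + (- c / s) * (\<Sum>m\<in>UNIV. Riem g x i j k m * upv g x uu m)"
    proof -
      have "(\<Sum>m\<in>UNIV. Riem g x i j k m * upv g x bb m) = (\<Sum>m\<in>UNIV. (1/s) * (Riem g x i j k m * upv g x ww m)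
          + (- c / s) * (Riem g x i j k m * upv g x uu m))"
        by (intro sum.cong refl) (simp add: upb algebra_simps)
      then show ?thesis by (simp only: sum.distrib sum_distrib_left[symmetric])
    qed
    then show "(\<Sum>m\<in>UNIV. Riem g x i j k m * upv g x bb m) =
      (1/s) * Pg g x ww L l0 i j k + (- c / s) * Pg g x uu F p0 i j k" unfolding Pu Pw .
  qed
  define a where "a = dotv g x uu L"
  define bL where "bL = dotv g x bb L"
  define zz where "zz = (\<lambda>k. s * uu k + c * bb k)"
  define \<kappa> where "\<kappa> = l0^2 - p0^2 - q"
  have E0: "\<And>i j. (\<Sum>k\<in>UNIV. upv g x uu k * Pg g x ww L l0 i j k) + (\<Sum>k\<in>UNIV. upv g x ww k * Pg g x uu F p0 i j k) = 0"
    using anti_contr[OF x, of uu _ _ ww] by (simp add: Pu Pw)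
  have E1: "\<And>i j. (L i * (dotv g x uu ww * ww j + uu j) - L j * (dotv g x uu ww * ww i + uu i) + l0^2 * (ww j * uu i - ww i * uu j))
     + (F i * (dotv g x ww uu * uu j + ww j) - F j * (dotv g x ww uu * uu i + ww i) + p0^2 * (uu j * ww i - uu i * ww j)) = 0"
    using E0 unfolding C3[OF x] .
  have Li: "\<And>i. L i = (s * (s * a + c * bL) + c * \<kappa>) * uu i + (c * (s * a + c * bL) + s * \<kappa>) * bb i"
  proof -
    fix i
    have "(\<lambda>j. (L i * (dotv g x uu ww * ww j + uu j) - L j * (dotv g x uu ww * ww i + uu i) + l0^2 * (ww j * uu i - ww i * uu j))
     + (F i * (dotv g x ww uu * uu j + ww j) - F j * (dotv g x ww uu * uu i + ww i) + p0^2 * (uu j * ww i - uu i * ww j))) = (\<lambda>j. 0)"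
      using E1 by (simp add: fun_eq_iff)
    then have "dotv g x zz (\<lambda>j. (L i * (dotv g x uu ww * ww j + uu j) - L j * (dotv g x uu ww * ww i + uu i) + l0^2 * (ww j * uu i - ww i * uu j))
     + (F i * (dotv g x ww uu * uu j + ww j) - F j * (dotv g x ww uu * uu i + ww i) + p0^2 * (uu j * ww i - uu i * ww j))) = 0"
      by (simp add: dotv_zero)
    then have e: "s * L i - s * ((s * (s * a + c * bL) + c * \<kappa>) * uu i + (c * (s * a + c * bL) + s * \<kappa>) * bb i) = 0"
      unfolding zz_def hw
      apply (simp add: dot_simps duu dbb dub dbu a_def[symmetric] bL_def[symmetric])
      unfolding hF
      apply (simp add: dot_simps duu dbb dub dbu \<kappa>_def)
      using hcs by algebra
    then show "L i = (s * (s * a + c * bL) + c * \<kappa>) * uu i + (c * (s * a + c * bL) + s * \<kappa>) * bb i"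
      using hs by (simp add: right_diff_distrib[symmetric])
  qed
  have hL: "L = (\<lambda>k. (s * (s * a + c * bL) + c * \<kappa>) * uu k + (c * (s * a + c * bL) + s * \<kappa>) * bb k)"
    by (rule ext) (rule Li)
  have eb: "bL = c * (s * a + c * bL) + s * \<kappa>"
    using bL_def unfolding hL by (simp add: dot_simps duu dbb dub dbu)
  have R1: "c * a + s * bL = - \<kappa>"
  proof -
    have "s * (c * a + s * bL + \<kappa>) = 0" using eb hcs by algebra
    then show ?thesis using hs by simp
  qed
  have hRU: "\<And>k. dotv g x uu (Ric g x k) = dotv g x uu F * uu k + F k - F k * (dotv g x uu uu + N) + p0^2 * (N * uu k - uu k)"
    by (simp only: dotv_comm_def ricY[OF x] Pu C2[OF x] N_def)
  have GG: "\<And>k. (\<Sum>a\<in>UNIV. \<Sum>m\<in>UNIV. ginv g x a m * (\<Sum>r\<in>UNIV. Riem g x a k m r * upv g x bb r)) =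
      (1/s) * (\<Sum>a\<in>UNIV. \<Sum>m\<in>UNIV. ginv g x a m * Pg g x ww L l0 a k m)
      + (- c / s) * (\<Sum>a\<in>UNIV. \<Sum>m\<in>UNIV. ginv g x a m * Pg g x uu F p0 a k m)"
  proof -
    fix k
    have "(\<Sum>a\<in>UNIV. \<Sum>m\<in>UNIV. ginv g x a m * (\<Sum>r\<in>UNIV. Riem g x a k m r * upv g x bb r)) =
       (\<Sum>a\<in>UNIV. \<Sum>m\<in>UNIV. (1/s) * (ginv g x a m * Pg g x ww L l0 a k m) + (- c / s) * (ginv g x a m * Pg g x uu F p0 a k m))"
      by (intro sum.cong refl) (simp only: Pb, simp add: algebra_simps)
    then show "(\<Sum>a\<in>UNIV. \<Sum>m\<in>UNIV. ginv g x a m * (\<Sum>r\<in>UNIV. Riem g x a k m r * upv g x bb r)) =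
      (1/s) * (\<Sum>a\<in>UNIV. \<Sum>m\<in>UNIV. ginv g x a m * Pg g x ww L l0 a k m)
      + (- c / s) * (\<Sum>a\<in>UNIV. \<Sum>m\<in>UNIV. ginv g x a m * Pg g x uu F p0 a k m)"
      by (simp only: sum.distrib sum_distrib_left[symmetric])
  qed
  have hRB: "\<And>k. dotv g x bb (Ric g x k) =
     (1/s) * (dotv g x ww L * ww k + L k - L k * (dotv g x ww ww + N) + l0^2 * (N * ww k - ww k))
     + (- c / s) * (dotv g x uu F * uu k + F k - F k * (dotv g x uu uu + N) + p0^2 * (N * uu k - uu k))"
    by (simp only: dotv_comm_def ricY[OF x] GG C2[OF x] N_def)
  have R2: "dotv g x bb (\<lambda>k. dotv g x uu (Ric g x k)) = dotv g x uu (\<lambda>k. dotv g x bb (Ric g x k))"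
    by (rule ric_contr[OF x])
  have R2': "(N - 2) * (a - (v0 * s - c * \<kappa>)) = 0"
  proof -
    have "dotv g x bb (\<lambda>k. dotv g x uu F * uu k + F k - F k * (dotv g x uu uu + N) + p0^2 * (N * uu k - uu k))
      = dotv g x uu (\<lambda>k. (1/s) * (dotv g x ww L * ww k + L k - L k * (dotv g x ww ww + N) + l0^2 * (N * ww k - ww k))
     + (- c / s) * (dotv g x uu F * uu k + F k - F k * (dotv g x uu uu + N) + p0^2 * (N * uu k - uu k)))"
      using R2 unfolding hRU hRB .
    then show ?thesis
      unfolding hw hF a_def[symmetric]
      apply (simp add: dot_simps duu dbb dub dbu q_def[symmetric] a_def[symmetric] bL_def[symmetric])
      apply (simp add: field_simps hs)
      using hcs R1 unfolding \<kappa>_def by algebra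
  qed
  have ha: "a = v0 * s - c * \<kappa>" using R2' hN by simp
  have hbL: "bL = s * \<kappa> - c * v0"
  proof -
    have "s * (bL - (s * \<kappa> - c * v0)) = 0" using R1 ha hcs by algebra
    then show ?thesis using hs by simp
  qed
  have hL2: "L = (\<lambda>k. (\<kappa> * c - v0 * s) * uu k + (\<kappa> * s - v0 * c) * bb k)"
    unfolding hL ha hbL by (rule ext) (use hcs in algebra)
  have dim2: "CARD('n) > 2" using dim by simp
  have sinv: "s * inverse s = 1" using hs by simp
  have N2inv: "(N - 2) * inverse (N - 2) = 1" using hN by simp
  have N1inv: "(N - 1) * inverse (N - 1) = 1" using hN by simp
  have LHS1: "(\<Sum>r\<in>UNIV. \<Sum>s\<in>UNIV. (up g u x r * up g u x s + up g b x r * up g b x s) * Weyl g x r i j s) =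
     (\<Sum>r\<in>UNIV. \<Sum>s\<in>UNIV. upv g x uu r * upv g x uu s * Weyl g x r i j s) +
     (\<Sum>r\<in>UNIV. \<Sum>s\<in>UNIV. upv g x bb r * upv g x bb s * Weyl g x r i j s)"
    by (simp add: up_eq uu_def bb_def distrib_right sum.distrib)
  have Ut: "\<And>i j. (\<Sum>r\<in>UNIV. upv g x uu r * (\<Sum>s\<in>UNIV. Riem g x r i j s * upv g x uu s)) =
      dotv g x uu (\<lambda>r. Pg g x uu F p0 r i j)"
    unfolding Pu dotv_def ..
  have Bt: "\<And>i j. (\<Sum>r\<in>UNIV. upv g x bb r * (\<Sum>s\<in>UNIV. Riem g x r i j s * upv g x bb s)) =
      (1/s) * dotv g x bb (\<lambda>r. Pg g x ww L l0 r i j) + (- c / s) * dotv g x bb (\<lambda>r. Pg g x uu F p0 r i j)"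
    unfolding Pb dotv_def[symmetric] dotv_add dotv_cl ..
  have Rc: "\<And>Y i. (\<Sum>s\<in>UNIV. Ric g x i s * upv g x Y s) = dotv g x Y (Ric g x i)"
    by (simp add: dotv_comm_def)
  have RHS1: "(\<Sum>k\<in>UNIV. \<Sum>l\<in>UNIV. up g b x k * up g b x l * Eweyl g u x k l) =
     dotv g x bb (\<lambda>k. dotv g x bb (\<lambda>l. (\<Sum>r\<in>UNIV. \<Sum>s\<in>UNIV. upv g x uu r * upv g x uu s * Weyl g x r k l s)))"
    unfolding Eweyl_def dotv_def up_eq uu_def bb_def by (simp add: sum_distrib_left mult_ac)
  show "(\<Sum>r\<in>UNIV. \<Sum>s\<in>UNIV. (up g u x r * up g u x s + up g b x r * up g b x s) * Weyl g x r i j s)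
     = (u x i * u x j + b x i * b x j) *
       (\<Sum>k\<in>UNIV. \<Sum>l\<in>UNIV. up g b x k * up g b x l * Eweyl g u x k l)"
    unfolding LHS1 RHS1 W1[OF x dim2] Ut Bt Rc uu_def[symmetric] bb_def[symmetric]
    unfolding C1d[OF x] hRU hRB dgk[OF x]
    unfolding hw hF hL2
    apply (simp add: dot_simps duu dbb dub dbu dgk[OF x] hRB N_def[symmetric])
    unfolding hw hF hL2
    apply (simp add: dot_simps duu dbb dub dbu dgk[OF x])
    apply (simp only: divide_inverse inverse_mult_distrib)
    unfolding \<kappa>_def
    using hcs sinv N2inv N1inv by algebra
qed

end
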